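(* Let $m\ge1$ and $n_1,\dots,n_m\ge2$ be integers, $\mathcal D=\mathcal D_1\times\cdots\times\mathcal D_m$ the full factorial design where $\mathcal D_j$ is the set of $n_j$-th roots of unity, ordered lexicographically, and $L=\mathbb Z_{n_1}\times\cdots\times\mathbb Z_{n_m}$. Let $\mathcal F$ be a nonempty fraction (multiset of points of $\mathcal D$) with counting function $R=\sum_{\alpha\in L}c_\alpha X^\alpha$, where $X^\alpha(\zeta)=\zeta_1^{\alpha_1}\cdots\zeta_m^{\alpha_m}$, and let $\#\mathcal F=\sum_{\zeta\in\mathcal D}R(\zeta)$. Define the generalized wordlength pattern $(\alpha_1(\mathcal F),\dots,\alpha_m(\mathcal F))$ by \[ \alpha_i(\mathcal F)=\sum_{\alpha\in L,\ \|\alpha\|_0=i}\left(\frac{\|c_\alpha\|_2}{\|c_0\|_2}\right)^2,\quad i=1,\dots,m, \] where $\|\alpha\|_0$ is the number of nonzero components of $\alpha$ and $\|\cdot\|_2$ is the complex modulus. Let $Y=[R(\zeta):\zeta\in\mathcal D]$, and for $\alpha\in L$ let $H^\alpha_R$ be the real part (entrywise) of $\overline{X^\alpha}(X^\alpha)^T$, where $X^\alpha$ is the column vector $[X^\alpha(\zeta):\zeta\in\mathcal D]$. Then \[ \alpha_i(\mathcal F)=\frac{1}{(\#\mathcal F)^2}\,Y^T H_i Y,\qquad i=1,\dots,m, \] where $H_i=\sum_{\alpha\in L,\ \|\alpha\|_0=i}H_R^\alpha$.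
   Context: The counting function $R$ gives, for each $\zeta\in\mathcal D$, the number of times $\zeta$ appears in $\mathcal F$; the monomials $X^\alpha$, $\alpha\in L$, form a basis of complex functions on $\mathcal D$, so the $c_\alpha$ are unique. $c_0$ denotes the coefficient for $\alpha=(0,\dots,0)$. *)

theory Defs
  imports "HOL-Analysis.Analysis" "HOL-Library.Multiset"
begin

definition design :: "nat \<Rightarrow> (nat \<Rightarrow> nat) \<Rightarrow> (nat \<Rightarrow> complex) set" where
  "design m n = PiE {..<m} (\<lambda>j. {z::complex. z ^ n j = 1})"

definition exps :: "nat \<Rightarrow> (nat \<Rightarrow> nat) \<Rightarrow> (nat \<Rightarrow> nat) set" where
  "exps m n = PiE {..<m} (\<lambda>j. {..<n j})"

definition zero_exp :: "nat \<Rightarrow> nat \<Rightarrow> nat" where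
  "zero_exp m = restrict (\<lambda>_. 0) {..<m}"

definition monomial :: "nat \<Rightarrow> (nat \<Rightarrow> nat) \<Rightarrow> (nat \<Rightarrow> complex) \<Rightarrow> complex" where
  "monomial m \<alpha> \<zeta> = (\<Prod>j<m. \<zeta> j ^ \<alpha> j)"

definition weight0 :: "nat \<Rightarrow> (nat \<Rightarrow> nat) \<Rightarrow> nat" where
  "weight0 m \<alpha> = card {j \<in> {..<m}. \<alpha> j \<noteq> 0}"

definition gwlp :: "nat \<Rightarrow> (nat \<Rightarrow> nat) \<Rightarrow> ((nat \<Rightarrow> nat) \<Rightarrow> complex) \<Rightarrow> nat \<Rightarrow> real" where
  "gwlp m n c i = (\<Sum>\<alpha>\<in>{\<alpha>\<in>exps m n. weight0 m \<alpha> = i}. (cmod (c \<alpha>) / cmod (c (zero_exp m)))^2)"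

definition HR :: "nat \<Rightarrow> (nat \<Rightarrow> nat) \<Rightarrow> (nat \<Rightarrow> complex) \<Rightarrow> (nat \<Rightarrow> complex) \<Rightarrow> real" where
  "HR m \<alpha> \<zeta> \<eta> = Re (cnj (monomial m \<alpha> \<zeta>) * monomial m \<alpha> \<eta>)"

definition Hmat :: "nat \<Rightarrow> (nat \<Rightarrow> nat) \<Rightarrow> nat \<Rightarrow> (nat \<Rightarrow> complex) \<Rightarrow> (nat \<Rightarrow> complex) \<Rightarrow> real" where
  "Hmat m n i \<zeta> \<eta> = (\<Sum>\<alpha>\<in>{\<alpha>\<in>exps m n. weight0 m \<alpha> = i}. HR m \<alpha> \<zeta> \<eta>)"

definition qform :: "(nat \<Rightarrow> complex) set \<Rightarrow> ((nat \<Rightarrow> complex) \<Rightarrow> (nat \<Rightarrow> complex) \<Rightarrow> real)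
    \<Rightarrow> ((nat \<Rightarrow> complex) \<Rightarrow> real) \<Rightarrow> real" where
  "qform D H Y = (\<Sum>\<zeta>\<in>D. \<Sum>\<eta>\<in>D. Y \<zeta> * H \<zeta> \<eta> * Y \<eta>)"

end

theory Submission
  imports Defs
begin

lemma sum_roots_pow:
  assumes "0 < k" "k < n"
  shows "(\<Sum>z\<in>{z::complex. z^n=1}. z^k) = 0"
proof -
  define w where "w = cis (2*pi*real k/real n)"
  have n0: "n > 0" using assms by simp
  have "w \<noteq> 1"
  proof
    assume "w=1"
    then obtain j::int where "2*pi*real k/real n = 2*pi* of_int j"
      by (auto simp: w_def complex_eq_iff cos_one_2pi_int)
    hence "real k = real n * of_int j" using n0 by (simp add: field_simps)
    hence "int k = int n * j" by (metis of_int_eq_iff of_int_mult of_int_of_nat_eq)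
    then show False
    proof (cases "j \<le> 0")
      case True
      hence "int n * j \<le> 0" by (simp add: mult_nonneg_nonpos)
      then show False using \<open>int k = int n * j\<close> assms by simp
    next
      case False
      hence "int n * 1 \<le> int n * j" using False mult_left_mono[of 1 j "int n"] by simp
      then show False using \<open>int k = int n * j\<close> assms by linarith
    qed
  qed
  have "(\<Sum>z | z^n=1. z^k) = (\<Sum>l<n. cis(2*pi*real l/real n)^k)"
    by (rule sum.reindex_bij_betw[symmetric], rule Complex.bij_betw_roots_unity[OF n0])
  also have "\<dots> = (\<Sum>l<n. w^l)"
    unfolding w_def Complex.DeMoivre by (intro sum.cong refl) (simp add: mult_ac)
  also have "\<dots> = (w^n - 1)/(w-1)" using \<open>w \<noteq> 1\<close> by (subst geometric_sum) auto
  also have "w^n = cis (2*pi) ^ k" using n0 by (simp add: w_def Complex.DeMoivre mult_ac)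
  also have "cis (2*pi) = 1" by (simp add: complex_eq_iff)
  finally show ?thesis by simp
qed

lemma root_norm1:
  assumes "z^n = (1::complex)" "n > 0" shows "cnj z * z = 1"
proof -
  have "norm z ^ n = 1" using assms by (metis norm_one norm_power)
  hence "norm z = 1" using assms power_eq_imp_eq_base[of "norm z" n 1] by simp
  thus ?thesis by (metis complex_norm_square mult.commute of_real_1 power_one)
qed

lemma char_orth:
  assumes "a < n" "b < n"
  shows "(\<Sum>z\<in>{z::complex. z^n=1}. cnj z ^ a * z ^ b) = (if a = b then of_nat n else 0)"
proof -
  have n0: "n > 0" using assms by simp
  have fin: "finite {z::complex. z^n=1}" using n0 by (intro finite_roots_unity) simp
  consider "a = b" | "a < b" | "b < a" by linarith
  then show ?thesis
  proof cases
    case 1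
    have "(\<Sum>z\<in>{z::complex. z^n=1}. cnj z ^ a * z ^ b) = (\<Sum>z\<in>{z::complex. z^n=1}. 1)"
      using 1 n0 by (intro sum.cong refl) (simp add: power_mult_distrib[symmetric] root_norm1)
    then show ?thesis using 1 card_roots_unity_eq[OF n0] by simp
  next
    case 2
    have "(\<Sum>z\<in>{z::complex. z^n=1}. cnj z ^ a * z ^ b) = (\<Sum>z\<in>{z::complex. z^n=1}. z ^ (b - a))"
    proof (intro sum.cong refl)
      fix z assume z: "z \<in> {z::complex. z^n=1}"
      have "cnj z ^ a * z ^ b = (cnj z * z) ^ a * z ^ (b - a)"
        using 2 by (simp add: power_mult_distrib power_add[symmetric])
      then show "cnj z ^ a * z ^ b = z ^ (b - a)" using z n0 root_norm1 by simp
    qed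
    then show ?thesis using 2 sum_roots_pow[of "b - a" n] assms by simp
  next
    case 3
    have "(\<Sum>z\<in>{z::complex. z^n=1}. cnj z ^ a * z ^ b) = (\<Sum>z\<in>{z::complex. z^n=1}. cnj (z ^ (a - b)))"
    proof (intro sum.cong refl)
      fix z assume z: "z \<in> {z::complex. z^n=1}"
      have "cnj z ^ a * z ^ b = (cnj z * z) ^ b * cnj z ^ (a - b)"
        using 3 by (simp add: power_mult_distrib power_add[symmetric])
      then show "cnj z ^ a * z ^ b = cnj (z ^ (a - b))" using z n0 root_norm1 by simp
    qed
    also have "\<dots> = cnj (\<Sum>z\<in>{z::complex. z^n=1}. z ^ (a - b))" by (simp add: cnj_sum)
    finally show ?thesis using 3 sum_roots_pow[of "a - b" n] assms by simp
  qed
qed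


lemma mono_orth:
  assumes a: "\<alpha> \<in> exps m n" and b: "\<beta> \<in> exps m n"
  shows "(\<Sum>\<zeta>\<in>design m n. cnj (monomial m \<alpha> \<zeta>) * monomial m \<beta> \<zeta>)
         = (if \<alpha> = \<beta> then of_nat (\<Prod>j<m. n j) else 0)"
proof -
  have "(\<Sum>\<zeta>\<in>design m n. cnj (monomial m \<alpha> \<zeta>) * monomial m \<beta> \<zeta>)
      = (\<Sum>\<zeta>\<in>design m n. \<Prod>j<m. cnj (\<zeta> j) ^ \<alpha> j * \<zeta> j ^ \<beta> j)"
    by (simp add: monomial_def cnj_prod prod.distrib)
  also have "\<dots> = (\<Prod>j<m. \<Sum>z\<in>{z::complex. z ^ n j = 1}. cnj z ^ \<alpha> j * z ^ \<beta> j)"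
    unfolding design_def
  proof (rule prod_sum_PiE[symmetric])
    fix j assume "j \<in> {..<m}"
    hence "\<alpha> j \<in> {..<n j}" using a unfolding exps_def by (rule PiE_mem[rotated])
    hence "n j \<ge> 1" by simp
    thus "finite {z::complex. z ^ n j = 1}" by (intro finite_roots_unity)
  qed simp
  also have "\<dots> = (\<Prod>j<m. if \<alpha> j = \<beta> j then of_nat (n j) else 0)"
    using a b by (intro prod.cong refl char_orth) (auto simp: exps_def)
  also have "\<dots> = (if \<alpha> = \<beta> then of_nat (\<Prod>j<m. n j) else 0)"
  proof (cases "\<alpha> = \<beta>")
    case True then show ?thesis by simp
  next
    case False
    then obtain j where "j < m" "\<alpha> j \<noteq> \<beta> j"
      using a b unfolding exps_def by (metis PiE_ext lessThan_iff)
    then show ?thesis using False by (intro trans[OF prod_zero]) auto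
  qed
  finally show ?thesis .
qed

theorem proposition6:
  fixes m :: nat and n :: "nat \<Rightarrow> nat"
    and F :: "(nat \<Rightarrow> complex) multiset"
    and c :: "(nat \<Rightarrow> nat) \<Rightarrow> complex"
    and i :: nat
  assumes "m \<ge> 1"
    and "\<forall>j<m. n j \<ge> 2"
    and "set_mset F \<subseteq> design m n"
    and "F \<noteq> {#}"
    and "\<forall>\<zeta>\<in>design m n. of_nat (count F \<zeta>) = (\<Sum>\<alpha>\<in>exps m n. c \<alpha> * monomial m \<alpha> \<zeta>)"
    and "i \<in> {1..m}"
  shows "gwlp m n c i =
    1 / (\<Sum>\<zeta>\<in>design m n. real (count F \<zeta>))^2
      * qform (design m n) (Hmat m n i) (\<lambda>\<zeta>. real (count F \<zeta>))"
proof -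
  let ?D = "design m n" and ?L = "exps m n"
  define Y where "Y = (\<lambda>\<zeta>. real (count F \<zeta>))"
  define N where "N = (\<Prod>j<m. n j)"
  define T where "T = (\<lambda>\<alpha>. \<Sum>\<zeta>\<in>?D. cnj (monomial m \<alpha> \<zeta>) * complex_of_real (Y \<zeta>))"
  define A where "A = {\<alpha>\<in>?L. weight0 m \<alpha> = i}"
  have nj: "\<And>j. j < m \<Longrightarrow> n j > 0" using assms(2) by force
  have finD: "finite ?D" unfolding design_def
    using nj by (intro finite_PiE) (auto intro!: finite_roots_unity simp: Suc_le_eq)
  have finL: "finite ?L" unfolding exps_def by (intro finite_PiE) auto
  have N0: "N > 0" unfolding N_def using nj by (simp add: prod_pos)
  have T: "T \<alpha> = of_nat N * c \<alpha>" if a: "\<alpha> \<in> ?L" for \<alpha>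
  proof -
    have "T \<alpha> = (\<Sum>\<zeta>\<in>?D. cnj (monomial m \<alpha> \<zeta>) * (\<Sum>\<beta>\<in>?L. c \<beta> * monomial m \<beta> \<zeta>))"
      unfolding T_def Y_def using assms(5) by (intro sum.cong refl) simp
    also have "\<dots> = (\<Sum>\<beta>\<in>?L. c \<beta> * (\<Sum>\<zeta>\<in>?D. cnj (monomial m \<alpha> \<zeta>) * monomial m \<beta> \<zeta>))"
      by (simp add: sum_distrib_left mult_ac sum.swap[of _ ?D])
    also have "\<dots> = (\<Sum>\<beta>\<in>?L. c \<beta> * (if \<alpha> = \<beta> then of_nat N else 0))"
      using a by (intro sum.cong refl) (simp add: mono_orth N_def)
    also have "\<dots> = (\<Sum>\<beta>\<in>?L. if \<alpha> = \<beta> then c \<beta> * of_nat N else 0)"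
      by (intro sum.cong) auto
    also have "\<dots> = of_nat N * c \<alpha>" using a finL by (simp add: mult.commute)
    finally show ?thesis .
  qed
  have Q: "qform ?D (HR m \<alpha>) Y = (cmod (T \<alpha>))^2" for \<alpha>
  proof -
    have pt: "\<And>a b u v. a * Re (cnj u * v) * b = Re (cnj (complex_of_real a * u) * (complex_of_real b * v))"
      by (simp add: algebra_simps)
    define S where "S = (\<Sum>\<eta>\<in>?D. complex_of_real (Y \<eta>) * monomial m \<alpha> \<eta>)"
    have "qform ?D (HR m \<alpha>) Y = Re (\<Sum>\<zeta>\<in>?D. \<Sum>\<eta>\<in>?D. cnj (complex_of_real (Y \<zeta>) * monomial m \<alpha> \<zeta>) * (complex_of_real (Y \<eta>) * monomial m \<alpha> \<eta>))"
      unfolding qform_def HR_def Re_sum by (simp only: pt)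
    also have "\<dots> = Re (S * cnj S)"
      unfolding S_def cnj_sum sum_distrib_left sum_distrib_right by (simp only: mult.commute)
    also have "\<dots> = (cmod S)^2" by (simp only: complex_norm_square[symmetric] Re_complex_of_real)
    also have "cnj S = T \<alpha>" unfolding S_def T_def cnj_sum by (simp add: mult.commute)
    hence "cmod S = cmod (T \<alpha>)" by (metis complex_mod_cnj)
    finally show ?thesis .
  qed
  have H: "qform ?D (Hmat m n i) Y = (\<Sum>\<alpha>\<in>A. qform ?D (HR m \<alpha>) Y)"
  proof -
    have "(\<Sum>\<alpha>\<in>A. qform ?D (HR m \<alpha>) Y) = (\<Sum>\<zeta>\<in>?D. \<Sum>\<alpha>\<in>A. \<Sum>\<eta>\<in>?D. Y \<zeta> * HR m \<alpha> \<zeta> \<eta> * Y \<eta>)"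
      unfolding qform_def by (rule sum.swap)
    also have "\<dots> = (\<Sum>\<zeta>\<in>?D. \<Sum>\<eta>\<in>?D. \<Sum>\<alpha>\<in>A. Y \<zeta> * HR m \<alpha> \<zeta> \<eta> * Y \<eta>)"
      by (intro sum.cong refl sum.swap)
    also have "\<dots> = qform ?D (Hmat m n i) Y"
      unfolding qform_def Hmat_def A_def by (simp add: sum_distrib_left sum_distrib_right)
    finally show ?thesis by simp
  qed
  define S0 where "S0 = (\<Sum>\<zeta>\<in>?D. Y \<zeta>)"
  have z: "zero_exp m \<in> ?L" unfolding zero_exp_def exps_def using nj by auto
  have "T (zero_exp m) = complex_of_real S0"
    unfolding T_def S0_def by (simp add: monomial_def zero_exp_def)
  hence "of_nat N * c (zero_exp m) = complex_of_real S0" using T[OF z] by simp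
  hence "real N * cmod (c (zero_exp m)) = S0"
    by (metis S0_def Y_def abs_of_nonneg norm_mult norm_of_nat norm_of_real of_nat_0_le_iff sum_nonneg)
  hence c0: "cmod (c (zero_exp m)) = S0 / real N" using N0 by (simp add: field_simps)
  have "gwlp m n c i = (\<Sum>\<alpha>\<in>A. (real N * cmod (c \<alpha>) / S0)^2)"
    unfolding gwlp_def A_def c0 using N0 by (intro sum.cong refl) (simp add: field_simps)
  also have "\<dots> = (\<Sum>\<alpha>\<in>A. 1 / S0^2 * qform ?D (HR m \<alpha>) Y)"
    unfolding Q using T A_def by (intro sum.cong refl) (simp add: power_divide norm_mult power_mult_distrib)
  also have "\<dots> = 1 / S0^2 * qform ?D (Hmat m n i) Y" unfolding H by (simp add: sum_distrib_left)
  finally show ?thesis unfolding S0_def Y_def .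
qed

end
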